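(* Let $r\ge 0$ and $d\ge r+1$ be integers and $R=\mathbb{R}[x,y,z]$. Let $\ell_1,\ell_2,\ell_3\in R$ be homogeneous linear forms that are the homogenizations (with respect to $z$) of equations of three distinct lines in $\mathbb{R}^2$ passing through a common point $p$, and let $L\in R$ be the homogenization of an equation of a line in $\mathbb{R}^2$ not containing $p$. Then for every homogeneous polynomial $g\in R$ of degree $d$ there exist homogeneous $u,v\in R$ of degree $d$ and homogeneous $w\in R$ of degree $r-1$ such that \[\ell_3^{r+1}g=\ell_1^{r+1}u+\ell_2^{r+1}v+L^{d-r+1}\ell_3^{r+1}w,\] with $w=0$ when $r=0$. *)

theory Defs
  imports Complex_Main "HOL-Library.Poly_Mapping" "HOL-Library.Product_Plus"
begin

text \<open>Polynomials in R = real[x,y,z]: finitely supported maps from exponent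
  triples (i,j,k) (monomial x^i y^j z^k) to real coefficients; multiplication
  is the convolution product of Poly_Mapping.\<close>
type_synonym mpoly3 = "(nat \<times> nat \<times> nat) \<Rightarrow>\<^sub>0 real"

definition varX :: mpoly3 where "varX = Poly_Mapping.single (1,0,0) 1"
definition varY :: mpoly3 where "varY = Poly_Mapping.single (0,1,0) 1"
definition varZ :: mpoly3 where "varZ = Poly_Mapping.single (0,0,1) 1"
definition const3 :: "real \<Rightarrow> mpoly3" where "const3 c = Poly_Mapping.single (0,0,0) c"

definition mdeg :: "nat \<times> nat \<times> nat \<Rightarrow> nat" where
  "mdeg m = (case m of (i,j,k) \<Rightarrow> i + j + k)"

text \<open>Homogeneous of degree d (the zero polynomial counts as homogeneous of every degree).\<close>
definition homogeneous :: "nat \<Rightarrow> mpoly3 \<Rightarrow> bool" where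
  "homogeneous d p \<longleftrightarrow> (\<forall>m \<in> Poly_Mapping.keys p. mdeg m = d)"

definition line_set :: "real \<Rightarrow> real \<Rightarrow> real \<Rightarrow> (real \<times> real) set" where
  "line_set a b c = {(x,y). a * x + b * y + c = 0}"

definition homog_lin :: "real \<Rightarrow> real \<Rightarrow> real \<Rightarrow> mpoly3" where
  "homog_lin a b c = const3 a * varX + const3 b * varY + const3 c * varZ"

end

theory Submission imports Defs begin

lemma const3_add: "const3 (x + y) = const3 x + const3 y"
  by (simp add: const3_def single_add)
lemma const3_mult: "const3 (x * y) = const3 x * const3 y"
  by (simp add: const3_def mult_single)
lemma z3: "((0::nat),(0::nat),(0::nat)) = 0" by (simp add: zero_prod_def)
lemma const3_one: "const3 1 = 1" by (simp add: const3_def z3)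
lemma const3_zero: "const3 0 = 0" by (simp add: const3_def)

lemma homog_0: "homogeneous n 0" by (simp add: homogeneous_def)
lemma homog_add: "homogeneous n p \<Longrightarrow> homogeneous n q \<Longrightarrow> homogeneous n (p + q)"
  unfolding homogeneous_def using keys_add[of p q] by blast
lemma mdeg_alt: "mdeg m = fst m + fst (snd m) + snd (snd m)"
  by (simp add: mdeg_def split: prod.split)
lemma mdeg_add: "mdeg (a + b) = mdeg a + mdeg b"
  by (simp add: mdeg_alt)
lemma homog_mult: "homogeneous m p \<Longrightarrow> homogeneous n q \<Longrightarrow> homogeneous (m + n) (p * q)"
  unfolding homogeneous_def
proof (intro ballI impI)
  fix x assume a: "\<forall>ma\<in>Poly_Mapping.keys p. mdeg ma = m" "\<forall>m\<in>Poly_Mapping.keys q. mdeg m = n"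
    and "x \<in> Poly_Mapping.keys (p * q)"
  then obtain u v where "x = u + v" "u \<in> Poly_Mapping.keys p" "v \<in> Poly_Mapping.keys q"
    using keys_mult[of p q] by blast
  then show "mdeg x = m + n" using a by (simp add: mdeg_add)
qed
lemma homog_const3: "homogeneous 0 (const3 c)"
  by (simp add: homogeneous_def const3_def mdeg_def)
lemma homog_one: "homogeneous 0 1"
  by (simp add: homogeneous_def mdeg_def zero_prod_def)
lemma homog_pow: "homogeneous n p \<Longrightarrow> homogeneous (k * n) (p ^ k)"
  by (induction k) (simp_all add: homog_one homog_mult)
lemma homog_cmult: "homogeneous n p \<Longrightarrow> homogeneous n (const3 c * p)"
  using homog_mult[OF homog_const3] by fastforce
lemma homog_lin1: "homogeneous 1 (homog_lin a b c)"
proof -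
  have "homogeneous 1 varX" "homogeneous 1 varY" "homogeneous 1 varZ"
    by (simp_all add: homogeneous_def varX_def varY_def varZ_def mdeg_def)
  then show ?thesis unfolding homog_lin_def by (intro homog_add homog_cmult)
qed

lemma lin_comb: "const3 s1 * homog_lin a1 b1 c1 + const3 s2 * homog_lin a2 b2 c2 + const3 s3 * homog_lin a3 b3 c3
   = homog_lin (s1*a1+s2*a2+s3*a3) (s1*b1+s2*b2+s3*b3) (s1*c1+s2*c2+s3*c3)"
  unfolding homog_lin_def const3_add const3_mult by (simp add: algebra_simps)

lemma monom_eq: "Poly_Mapping.single (i,j,k) c = const3 c * varX ^ i * varY ^ j * varZ ^ k"
proof -
  have px: "varX ^ i = Poly_Mapping.single (i,0,0) 1" for i
    by (induction i) (simp_all add: varX_def mult_single z3)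
  have py: "varY ^ j = Poly_Mapping.single (0,j,0) 1" for j
    by (induction j) (simp_all add: varY_def mult_single z3)
  have pz: "varZ ^ k = Poly_Mapping.single (0,0,k) 1" for k
    by (induction k) (simp_all add: varZ_def mult_single z3)
  show ?thesis by (simp add: px py pz const3_def mult_single z3)
qed

lemma sum_monoms: "g = (\<Sum>m\<in>Poly_Mapping.keys g. Poly_Mapping.single m (Poly_Mapping.lookup g m))"
proof (rule poly_mapping_eqI)
  fix k
  have "finite (Poly_Mapping.keys g)" by simp
  show "Poly_Mapping.lookup g k = Poly_Mapping.lookup (\<Sum>m\<in>Poly_Mapping.keys g. Poly_Mapping.single m (Poly_Mapping.lookup g m)) k"
    by (simp add: lookup_sum lookup_single when_def in_keys_iff)
qed

inductive_set Sp :: "mpoly3 \<Rightarrow> mpoly3 \<Rightarrow> mpoly3 \<Rightarrow> nat \<Rightarrow> mpoly3 set" for A B C n where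
  Sp0: "0 \<in> Sp A B C n"
| SpM: "i + j + k = n \<Longrightarrow> q \<in> Sp A B C n \<Longrightarrow> const3 c * A ^ i * B ^ j * C ^ k + q \<in> Sp A B C n"

lemma Sp_add: "p \<in> Sp A B C n \<Longrightarrow> q \<in> Sp A B C n \<Longrightarrow> p + q \<in> Sp A B C n"
  by (induction p rule: Sp.induct) (auto simp: add.assoc intro: Sp.intros)

lemma Sp_cmult: "p \<in> Sp A B C n \<Longrightarrow> const3 c * p \<in> Sp A B C n"
proof (induction p rule: Sp.induct)
  case Sp0 then show ?case by (simp add: Sp.Sp0)
next
  case (SpM i j k q d)
  have "const3 c * (const3 d * A ^ i * B ^ j * C ^ k + q) = const3 (c*d) * A ^ i * B ^ j * C ^ k + const3 c * q"
    by (simp add: const3_mult algebra_simps)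
  then show ?case using SpM by (auto intro: Sp.SpM)
qed

lemma Sp_multA: "p \<in> Sp A B C n \<Longrightarrow> A * p \<in> Sp A B C (Suc n)"
proof (induction p rule: Sp.induct)
  case Sp0 then show ?case by (simp add: Sp.Sp0)
next
  case (SpM i j k q d)
  have "A * (const3 d * A ^ i * B ^ j * C ^ k + q) = const3 d * A ^ Suc i * B ^ j * C ^ k + A * q"
    by (simp add: algebra_simps)
  moreover have "const3 d * A ^ Suc i * B ^ j * C ^ k + A * q \<in> Sp A B C (Suc n)"
    by (rule Sp.SpM) (use SpM in auto)
  ultimately show ?case by simp
qed

lemma Sp_multB: "p \<in> Sp A B C n \<Longrightarrow> B * p \<in> Sp A B C (Suc n)"
proof (induction p rule: Sp.induct)
  case Sp0 then show ?case by (simp add: Sp.Sp0)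
next
  case (SpM i j k q d)
  have "B * (const3 d * A ^ i * B ^ j * C ^ k + q) = const3 d * A ^ i * B ^ Suc j * C ^ k + B * q"
    by (simp add: algebra_simps)
  moreover have "const3 d * A ^ i * B ^ Suc j * C ^ k + B * q \<in> Sp A B C (Suc n)"
    by (rule Sp.SpM) (use SpM in auto)
  ultimately show ?case by simp
qed

lemma Sp_multC: "p \<in> Sp A B C n \<Longrightarrow> C * p \<in> Sp A B C (Suc n)"
proof (induction p rule: Sp.induct)
  case Sp0 then show ?case by (simp add: Sp.Sp0)
next
  case (SpM i j k q d)
  have "C * (const3 d * A ^ i * B ^ j * C ^ k + q) = const3 d * A ^ i * B ^ j * C ^ Suc k + C * q"
    by (simp add: algebra_simps)
  moreover have "const3 d * A ^ i * B ^ j * C ^ Suc k + C * q \<in> Sp A B C (Suc n)"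
    by (rule Sp.SpM) (use SpM in auto)
  ultimately show ?case by simp
qed

lemma Sp_powA: "q \<in> Sp A B C n \<Longrightarrow> A ^ i * q \<in> Sp A B C (n + i)"
  by (induction i) (auto simp: mult.assoc dest: Sp_multA)
lemma Sp_powB: "q \<in> Sp A B C n \<Longrightarrow> B ^ i * q \<in> Sp A B C (n + i)"
  by (induction i) (auto simp: mult.assoc dest: Sp_multB)
lemma Sp_powC: "q \<in> Sp A B C n \<Longrightarrow> C ^ i * q \<in> Sp A B C (n + i)"
  by (induction i) (auto simp: mult.assoc dest: Sp_multC)

lemma Sp_multMon: "q \<in> Sp A B C n \<Longrightarrow> A ^ i * B ^ j * C ^ k * q \<in> Sp A B C (n + i + j + k)"
proof -
  assume "q \<in> Sp A B C n"
  then have "A ^ i * (B ^ j * (C ^ k * q)) \<in> Sp A B C (n + k + j + i)"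
    by (intro Sp_powA Sp_powB Sp_powC)
  then show ?thesis by (simp add: mult.assoc algebra_simps)
qed

lemma Sp_mult: "p \<in> Sp A B C m \<Longrightarrow> q \<in> Sp A B C n \<Longrightarrow> p * q \<in> Sp A B C (m + n)"
proof (induction p rule: Sp.induct)
  case Sp0 then show ?case by (simp add: Sp.Sp0)
next
  case (SpM i j k p' d)
  have e: "(const3 d * A ^ i * B ^ j * C ^ k + p') * q = const3 d * (A ^ i * B ^ j * C ^ k * q) + p' * q"
    by (simp add: algebra_simps)
  have "A ^ i * B ^ j * C ^ k * q \<in> Sp A B C (n + i + j + k)" by (rule Sp_multMon[OF SpM.prems])
  moreover have "n + i + j + k = m + n" using SpM.hyps(1) by simp
  ultimately have "A ^ i * B ^ j * C ^ k * q \<in> Sp A B C (m + n)" by simp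
  then show ?case unfolding e using SpM by (intro Sp_add Sp_cmult) auto
qed

lemma Sp_one: "1 \<in> Sp A B C 0"
proof -
  have "const3 1 * A ^ 0 * B ^ 0 * C ^ 0 + 0 \<in> Sp A B C 0" by (intro Sp.intros) auto
  then show ?thesis by (simp add: const3_one)
qed

lemma Sp_pow: "p \<in> Sp A B C 1 \<Longrightarrow> p ^ k \<in> Sp A B C k"
  by (induction k) (auto simp: Sp_one dest: Sp_mult)

lemma Sp_lin: "const3 s1 * A + const3 s2 * B + const3 s3 * C \<in> Sp A B C 1"
proof -
  have "const3 s1 * A ^ 1 * B ^ 0 * C ^ 0 + (const3 s2 * A ^ 0 * B ^ 1 * C ^ 0 + (const3 s3 * A ^ 0 * B ^ 0 * C ^ 1 + 0)) \<in> Sp A B C 1"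
    by (intro Sp.intros) auto
  then show ?thesis by (simp add: add.assoc)
qed

lemma Sp_all:
  assumes "varX \<in> Sp A B C 1" "varY \<in> Sp A B C 1" "varZ \<in> Sp A B C 1" "homogeneous d g"
  shows "g \<in> Sp A B C d"
proof -
  have "Poly_Mapping.single m (Poly_Mapping.lookup g m) \<in> Sp A B C d" if "m \<in> Poly_Mapping.keys g" for m
  proof -
    obtain i j k where m: "m = (i,j,k)" by (cases m) auto
    have "mdeg m = d" using assms(4) that by (simp add: homogeneous_def)
    then have "i + j + k = d" by (simp add: m mdeg_def)
    have "varX ^ i * varY ^ j * varZ ^ k \<in> Sp A B C (i + j + k)"
      using Sp_mult[OF Sp_mult[OF Sp_pow[OF assms(1)] Sp_pow[OF assms(2)]] Sp_pow[OF assms(3)]] .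
    then have "const3 (Poly_Mapping.lookup g m) * (varX ^ i * varY ^ j * varZ ^ k) \<in> Sp A B C d"
      using \<open>i + j + k = d\<close> by (auto intro: Sp_cmult)
    then show ?thesis by (simp add: m monom_eq mult.assoc)
  qed
  moreover have "\<And>K. finite K \<Longrightarrow> (\<forall>m\<in>K. f m \<in> Sp A B C d) \<Longrightarrow> sum f K \<in> Sp A B C d" for f :: "nat\<times>nat\<times>nat \<Rightarrow> mpoly3"
  proof -
    fix K :: "(nat\<times>nat\<times>nat) set" assume "finite K" "\<forall>m\<in>K. f m \<in> Sp A B C d"
    then show "sum f K \<in> Sp A B C d"
      by (induction K rule: finite_induct) (auto simp: Sp.Sp0 Sp_add)
  qed
  ultimately have "(\<Sum>m\<in>Poly_Mapping.keys g. Poly_Mapping.single m (Poly_Mapping.lookup g m)) \<in> Sp A B C d"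
    by (meson finite_keys)
  then show ?thesis using sum_monoms[of g] by simp
qed

lemma homog_eq: "homogeneous n p \<Longrightarrow> n = m \<Longrightarrow> homogeneous m p" by simp

lemma Qlem:
  assumes hA: "homogeneous 1 A" and hB: "homogeneous 1 B" and hC: "C = const3 \<alpha> * A + const3 \<beta> * B"
  shows "i + j + m \<ge> 2*r+1 \<Longrightarrow> \<exists>u v. homogeneous (i+j+m-(r+1)) u \<and> homogeneous (i+j+m-(r+1)) v \<and>
          A^i*B^j*C^m = A^(r+1)*u + B^(r+1)*v"
proof (induction m arbitrary: i j)
  case 0
  then have "i \<ge> r+1 \<or> j \<ge> r+1" by linarith
  then show ?case
  proof
    assume "i \<ge> r+1"
    have h: "homogeneous ((i-(r+1))*1 + j*1) (A^(i-(r+1))*B^j)"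
      by (intro homog_mult homog_pow hA hB)
    have "A^i = A^(r+1) * A^(i-(r+1))" using \<open>i \<ge> r+1\<close> by (metis le_add_diff_inverse power_add)
    then have "A^i*B^j*C^0 = A^(r+1)*(A^(i-(r+1))*B^j) + B^(r+1)*0" by (simp add: mult.assoc)
    moreover have "homogeneous (i+j+0-(r+1)) (A^(i-(r+1))*B^j)"
      by (rule homog_eq[OF h]) (use \<open>i \<ge> r+1\<close> in simp)
    ultimately show ?case using homog_0 by blast
  next
    assume "j \<ge> r+1"
    have h: "homogeneous (i*1 + (j-(r+1))*1) (A^i*B^(j-(r+1)))"
      by (intro homog_mult homog_pow hA hB)
    have "B^j = B^(r+1) * B^(j-(r+1))" using \<open>j \<ge> r+1\<close> by (metis le_add_diff_inverse power_add)
    then have "A^i*B^j*C^0 = A^(r+1)*0 + B^(r+1)*(A^i*B^(j-(r+1)))" by (simp add: algebra_simps)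
    moreover have "homogeneous (i+j+0-(r+1)) (A^i*B^(j-(r+1)))"
      by (rule homog_eq[OF h]) (use \<open>j \<ge> r+1\<close> in simp)
    ultimately show ?case using homog_0 by blast
  qed
next
  case (Suc m)
  obtain u1 v1 where 1: "homogeneous (Suc i+j+m-(r+1)) u1" "homogeneous (Suc i+j+m-(r+1)) v1"
    "A^Suc i*B^j*C^m = A^(r+1)*u1 + B^(r+1)*v1"
    using Suc.IH[of "Suc i" j] Suc.prems by auto
  obtain u2 v2 where 2: "homogeneous (i+Suc j+m-(r+1)) u2" "homogeneous (i+Suc j+m-(r+1)) v2"
    "A^i*B^Suc j*C^m = A^(r+1)*u2 + B^(r+1)*v2"
    using Suc.IH[of i "Suc j"] Suc.prems by auto
  have "A^i*B^j*C^Suc m = const3 \<alpha> * (A^Suc i*B^j*C^m) + const3 \<beta> * (A^i*B^Suc j*C^m)"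
    by (simp add: hC algebra_simps)
  also have "\<dots> = A^(r+1)*(const3 \<alpha> * u1 + const3 \<beta> * u2) + B^(r+1)*(const3 \<alpha> * v1 + const3 \<beta> * v2)"
    unfolding 1(3) 2(3) by (simp add: algebra_simps)
  finally show ?case using 1 2
    by (intro exI[of _ "const3 \<alpha> * u1 + const3 \<beta> * u2"] exI[of _ "const3 \<alpha> * v1 + const3 \<beta> * v2"])
       (auto intro!: homog_add homog_cmult)
qed

lemma regroup: "(a*x2 + b*y2 + c*z2) + (a*x1 + b*y1 + c*z1) = a*(x2+x1) + b*(y2+y1) + c*(z2+(z1::'a::comm_ring))"
  by (simp add: algebra_simps)

lemma main_abs:
  assumes hA: "homogeneous 1 A" and hB: "homogeneous 1 B" and hL: "homogeneous 1 L"
    and hC: "C = const3 \<alpha> * A + const3 \<beta> * B" and hd: "d \<ge> r + 1"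
    and g: "g \<in> Sp A B L d"
  shows "\<exists>u v w. homogeneous d u \<and> homogeneous d v \<and> homogeneous (r - 1) w \<and>
           (r = 0 \<longrightarrow> w = 0) \<and>
           C ^ (r + 1) * g = A ^ (r + 1) * u + B ^ (r + 1) * v + L ^ (d - r + 1) * C ^ (r + 1) * w"
  using g
proof (induction g rule: Sp.induct)
  case Sp0
  then show ?case by (intro exI[of _ 0]) (simp add: homog_0)
next
  case (SpM i j k q c)
  from SpM.IH obtain u1 v1 w1 where 1: "homogeneous d u1" "homogeneous d v1" "homogeneous (r - 1) w1"
           "(r = 0 \<longrightarrow> w1 = 0)"
           "C ^ (r + 1) * q = A ^ (r + 1) * u1 + B ^ (r + 1) * v1 + L ^ (d - r + 1) * C ^ (r + 1) * w1"
    by blast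
  have "\<exists>u v w. homogeneous d u \<and> homogeneous d v \<and> homogeneous (r - 1) w \<and>
           (r = 0 \<longrightarrow> w = 0) \<and>
           C ^ (r + 1) * (const3 c * A ^ i * B ^ j * L ^ k) = A ^ (r + 1) * u + B ^ (r + 1) * v + L ^ (d - r + 1) * C ^ (r + 1) * w"
  proof (cases "k \<ge> d - r + 1")
    case True
    then have r: "r \<noteq> 0" using SpM.hyps(1) by auto
    define w where "w = const3 c * A ^ i * B ^ j * L ^ (k - (d - r + 1))"
    have h: "homogeneous (0 + i*1 + j*1 + (k - (d - r + 1))*1) w"
      unfolding w_def by (intro homog_mult homog_pow homog_const3 hA hB hL)
    have hw: "homogeneous (r - 1) w" using h by (rule homog_eq) (use SpM.hyps(1) True hd in auto)
    have "L^k = L^(d - r + 1) * L^(k - (d - r + 1))" using True by (metis le_add_diff_inverse power_add)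
    then have "C ^ (r + 1) * (const3 c * A ^ i * B ^ j * L ^ k) = A ^ (r + 1) * 0 + B ^ (r + 1) * 0 + L ^ (d - r + 1) * C ^ (r + 1) * w"
      unfolding w_def by (subst \<open>L^k = _\<close>) (simp only: mult_zero_right mult_zero_left add_0_right add_0_left mult_ac)
    then show ?thesis
      by (intro exI[of _ 0] exI[of _ w] conjI homog_0 hw) (use r in auto)
  next
    case False
    obtain u0 v0 where 0: "homogeneous (i+j+(r+1)-(r+1)) u0" "homogeneous (i+j+(r+1)-(r+1)) v0"
          "A^i*B^j*C^(r+1) = A^(r+1)*u0 + B^(r+1)*v0"
    proof -
      have "i + j + (r+1) \<ge> 2*r+1" using False SpM.hyps(1) hd by linarith
      then show ?thesis using Qlem[OF hA hB hC, of r i j "r+1"] that by blast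
    qed
    have hu: "homogeneous d (const3 c * L^k * u0)"
      using homog_mult[OF homog_mult[OF homog_const3 homog_pow[OF hL]] 0(1)]
      by (rule homog_eq) (use SpM.hyps(1) in auto)
    have hv: "homogeneous d (const3 c * L^k * v0)"
      using homog_mult[OF homog_mult[OF homog_const3 homog_pow[OF hL]] 0(2)]
      by (rule homog_eq) (use SpM.hyps(1) in auto)
    have "C ^ (r + 1) * (const3 c * A ^ i * B ^ j * L ^ k) = const3 c * L^k * (A^i*B^j*C^(r+1))"
      by (simp only: mult_ac)
    also have "\<dots> = A ^ (r + 1) * (const3 c * L^k * u0) + B ^ (r + 1) * (const3 c * L^k * v0) + L ^ (d - r + 1) * C ^ (r + 1) * 0"
      unfolding 0(3) by (simp only: mult_zero_right mult_zero_left add_0_right distrib_left mult_ac)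
    finally show ?thesis
      by (intro exI[of _ "const3 c * L^k * u0"] exI[of _ "const3 c * L^k * v0"] exI[of _ 0] conjI homog_0 hu hv) simp
  qed
  then obtain u2 v2 w2 where 2: "homogeneous d u2" "homogeneous d v2" "homogeneous (r - 1) w2"
           "(r = 0 \<longrightarrow> w2 = 0)"
           "C ^ (r + 1) * (const3 c * A ^ i * B ^ j * L ^ k) = A ^ (r + 1) * u2 + B ^ (r + 1) * v2 + L ^ (d - r + 1) * C ^ (r + 1) * w2"
    by blast
  have e: "C ^ (r + 1) * (const3 c * A ^ i * B ^ j * L ^ k + q) = A ^ (r + 1) * (u2 + u1) + B ^ (r + 1) * (v2 + v1) + L ^ (d - r + 1) * C ^ (r + 1) * (w2 + w1)"
  proof -
    have "C ^ (r + 1) * (const3 c * A ^ i * B ^ j * L ^ k + q) = C ^ (r + 1) * (const3 c * A ^ i * B ^ j * L ^ k) + C ^ (r + 1) * q"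
      by (rule distrib_left)
    also have "\<dots> = (A ^ (r + 1) * u2 + B ^ (r + 1) * v2 + L ^ (d - r + 1) * C ^ (r + 1) * w2) + (A ^ (r + 1) * u1 + B ^ (r + 1) * v1 + L ^ (d - r + 1) * C ^ (r + 1) * w1)"
      by (simp only: 1(5) 2(5))
    also have "\<dots> = A ^ (r + 1) * (u2 + u1) + B ^ (r + 1) * (v2 + v1) + L ^ (d - r + 1) * C ^ (r + 1) * (w2 + w1)"
      by (rule regroup)
    finally show ?thesis .
  qed
  have h: "homogeneous d (u2 + u1)" "homogeneous d (v2 + v1)" "homogeneous (r - 1) (w2 + w1)"
    "r = 0 \<longrightarrow> w2 + w1 = 0"
    using 1 2 by (auto intro: homog_add)
  show ?case
    using h e by (intro exI[where x="u2+u1"] exI[where x="v2+v1"] exI[where x="w2+w1"] conjI) assumption+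
qed

lemma lines_eq:
  fixes a1 b1 c1 a2 b2 c2 px py :: real
  assumes "(a1,b1) \<noteq> (0,0)" "(a2,b2) \<noteq> (0,0)" "a1*px+b1*py+c1 = 0" "a2*px+b2*py+c2 = 0"
    "a1*b2 - a2*b1 = 0"
  shows "line_set a1 b1 c1 = line_set a2 b2 c2"
proof -
  obtain l where l: "l \<noteq> 0" "a2 = l*a1" "b2 = l*b1"
  proof (cases "a1 = 0")
    case True
    then have "b1 \<noteq> 0" using assms(1) by auto
    have "a2 * b1 = 0" using assms(5) True by simp
    then have "a2 = 0" using \<open>b1 \<noteq> 0\<close> by simp
    then have "b2 \<noteq> 0" using assms(2) by auto
    show ?thesis
      by (rule that[of "b2/b1"]) (use \<open>b1 \<noteq> 0\<close> \<open>b2 \<noteq> 0\<close> \<open>a2 = 0\<close> True in auto)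
  next
    case False
    have "b2 = a2/a1*b1" using assms(5) False by (simp add: field_simps)
    moreover have "a2 \<noteq> 0"
    proof
      assume "a2 = 0" then have "b2 = 0" using \<open>b2 = a2/a1*b1\<close> by simp
      then show False using assms(2) \<open>a2 = 0\<close> by simp
    qed
    ultimately show ?thesis
      by (intro that[of "a2/a1"]) (use False in auto)
  qed
  have c2: "c2 = l*c1"
  proof -
    have "c2 = -(a2*px+b2*py)" using assms(4) by linarith
    also have "\<dots> = l*(-(a1*px+b1*py))" using l by (simp add: algebra_simps)
    also have "-(a1*px+b1*py) = c1" using assms(3) by linarith
    finally show ?thesis .
  qed
  have "a2*x+b2*y+c2 = l*(a1*x+b1*y+c1)" for x y
    using l c2 by (simp add: algebra_simps)
  then show ?thesis using l(1) by (auto simp: line_set_def)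
qed

lemma lin_repr:
  fixes a1 b1 c1 a2 b2 c2 a b c px py t1 t2 t3 :: real
  assumes d: "a1*b2 - a2*b1 \<noteq> 0" and e: "a*px+b*py+c \<noteq> 0"
    and h1: "a1*px+b1*py+c1 = 0" and h2: "a2*px+b2*py+c2 = 0"
  shows "\<exists>s1 s2 s3. homog_lin t1 t2 t3 = const3 s1 * homog_lin a1 b1 c1 + const3 s2 * homog_lin a2 b2 c2
     + const3 s3 * homog_lin a b c \<and> (t1*px+t2*py+t3 = 0 \<longrightarrow> s3 = 0)"
proof -
  define E where "E = a*px+b*py+c"
  define D where "D = a1*b2 - a2*b1"
  define s3 where "s3 = (t1*px+t2*py+t3)/E"
  define u1 where "u1 = t1 - s3*a"
  define u2 where "u2 = t2 - s3*b"
  define s1 where "s1 = (u1*b2 - u2*a2)/D"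
  define s2 where "s2 = (a1*u2 - b1*u1)/D"
  have D: "D \<noteq> 0" and E: "E \<noteq> 0" using d e by (simp_all add: D_def E_def)
  have "s1*a1 + s2*a2 = ((u1*b2 - u2*a2)*a1 + (a1*u2 - b1*u1)*a2)/D"
    unfolding s1_def s2_def by (simp add: add_divide_distrib)
  also have "(u1*b2 - u2*a2)*a1 + (a1*u2 - b1*u1)*a2 = u1 * D" unfolding D_def by (simp add: algebra_simps)
  finally have q1: "s1*a1 + s2*a2 = u1" using D by simp
  have "s1*b1 + s2*b2 = ((u1*b2 - u2*a2)*b1 + (a1*u2 - b1*u1)*b2)/D"
    unfolding s1_def s2_def by (simp add: add_divide_distrib)
  also have "(u1*b2 - u2*a2)*b1 + (a1*u2 - b1*u1)*b2 = u2 * D" unfolding D_def by (simp add: algebra_simps)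
  finally have q2: "s1*b1 + s2*b2 = u2" using D by simp
  have q3: "s3*E = t1*px+t2*py+t3" unfolding s3_def using E by simp
  have c1: "c1 = -a1*px-b1*py" and c2: "c2 = -a2*px-b2*py" and c: "c = E - a*px - b*py"
    using h1 h2 by (simp_all add: E_def algebra_simps)
  have "s1*c1+s2*c2+s3*c = -(s1*a1 + s2*a2)*px - (s1*b1 + s2*b2)*py + s3*E - s3*a*px - s3*b*py"
    unfolding c1 c2 c by (simp add: algebra_simps)
  also have "\<dots> = t3" unfolding q1 q2 q3 u1_def u2_def by (simp add: algebra_simps)
  finally have q3': "s1*c1+s2*c2+s3*c = t3" .
  have q1': "s1*a1+s2*a2+s3*a = t1" using q1 unfolding u1_def by simp
  have q2': "s1*b1+s2*b2+s3*b = t2" using q2 unfolding u2_def by simp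
  have z: "t1*px+t2*py+t3 = 0 \<longrightarrow> s3 = 0" by (simp add: s3_def)
  show ?thesis
    by (rule exI[of _ s1], rule exI[of _ s2], rule exI[of _ s3], intro conjI z)
       (simp add: lin_comb q1' q2' q3')
qed

theorem lemma5p2:
  fixes r d :: nat
    and a1 b1 c1 a2 b2 c2 a3 b3 c3 a b c :: real
    and p :: "real \<times> real"
  assumes hd: "d \<ge> r + 1"
    and line1: "(a1, b1) \<noteq> (0, 0)" and line2: "(a2, b2) \<noteq> (0, 0)"
    and line3: "(a3, b3) \<noteq> (0, 0)" and lineL: "(a, b) \<noteq> (0, 0)"
    and dist12: "line_set a1 b1 c1 \<noteq> line_set a2 b2 c2"
    and dist13: "line_set a1 b1 c1 \<noteq> line_set a3 b3 c3"
    and dist23: "line_set a2 b2 c2 \<noteq> line_set a3 b3 c3"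
    and p1: "p \<in> line_set a1 b1 c1" and p2: "p \<in> line_set a2 b2 c2"
    and p3: "p \<in> line_set a3 b3 c3"
    and pL: "p \<notin> line_set a b c"
    and g: "homogeneous d g"
  shows "\<exists>u v w. homogeneous d u \<and> homogeneous d v \<and> homogeneous (r - 1) w \<and>
           (r = 0 \<longrightarrow> w = 0) \<and>
           (homog_lin a3 b3 c3) ^ (r + 1) * g =
             (homog_lin a1 b1 c1) ^ (r + 1) * u + (homog_lin a2 b2 c2) ^ (r + 1) * v
             + (homog_lin a b c) ^ (d - r + 1) * (homog_lin a3 b3 c3) ^ (r + 1) * w"
proof -
  obtain px py where p: "p = (px, py)" by (cases p)
  have h1: "a1*px+b1*py+c1 = 0" using p1 p by (simp add: line_set_def)
  have h2: "a2*px+b2*py+c2 = 0" using p2 p by (simp add: line_set_def)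
  have h3: "a3*px+b3*py+c3 = 0" using p3 p by (simp add: line_set_def)
  have e: "a*px+b*py+c \<noteq> 0" using pL p by (simp add: line_set_def)
  have D: "a1*b2 - a2*b1 \<noteq> 0" using lines_eq[OF line1 line2 h1 h2] dist12 by blast
  note R = lin_repr[OF D e h1 h2]
  have inSp: "homog_lin t1 t2 t3 \<in> Sp (homog_lin a1 b1 c1) (homog_lin a2 b2 c2) (homog_lin a b c) 1"
    for t1 t2 t3
  proof -
    obtain s1 s2 s3 where "homog_lin t1 t2 t3 = const3 s1 * homog_lin a1 b1 c1 + const3 s2 * homog_lin a2 b2 c2
     + const3 s3 * homog_lin a b c" using R[of t1 t2 t3] by blast
    then show ?thesis using Sp_lin by simp
  qed
  have vX: "varX = homog_lin 1 0 0" and vY: "varY = homog_lin 0 1 0" and vZ: "varZ = homog_lin 0 0 1"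
    by (simp_all add: homog_lin_def const3_one const3_zero)
  have gS: "g \<in> Sp (homog_lin a1 b1 c1) (homog_lin a2 b2 c2) (homog_lin a b c) d"
    by (rule Sp_all[OF _ _ _ g]) (simp_all only: vX vY vZ inSp)
  obtain s1 s2 s3 where l3: "homog_lin a3 b3 c3 = const3 s1 * homog_lin a1 b1 c1 + const3 s2 * homog_lin a2 b2 c2
     + const3 s3 * homog_lin a b c" and "s3 = 0" using R[of a3 b3 c3] h3 by blast
  then have l3': "homog_lin a3 b3 c3 = const3 s1 * homog_lin a1 b1 c1 + const3 s2 * homog_lin a2 b2 c2"
    by (simp add: const3_zero)
  show ?thesis
    by (rule main_abs[OF homog_lin1 homog_lin1 homog_lin1 l3' hd gS])
qed

end
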